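(* Let $(X,Y)$ be a random pair in $\mathbb{R}^d\times\mathbb{R}$ with law $\rho$ such that $\|X\|^2\le K$ almost surely, and let $\Sigma=\mathbb{E}[XX^\top]$ and $L(\theta)=\frac12\mathbb{E}[(\langle\theta,X\rangle-Y)^2]$. For $\theta\in\mathbb{R}^d$ let $r_X(\theta)=\langle\theta,X\rangle-Y$ and $$\sigma(\theta)=\Big(\mathbb{E}[r_X(\theta)^2XX^\top]-\mathbb{E}[r_X(\theta)X]\,\mathbb{E}[r_X(\theta)X]^\top\Big)^{1/2}$$ (positive semidefinite square root). Assume there exists $a>0$ such that for all $\theta\in\mathbb{R}^d$, $\sigma(\theta)^2\succcurlyeq a^2L(\theta)I_d$ and $L(\theta)\ge a^2$. Then there exists a constant $c>0$ depending only on $\rho$ such that for all $\theta,\eta\in\mathbb{R}^d$, $$\|\sigma(\theta)-\sigma(\eta)\|_{\mathrm{HS}}^2\le 2cK\,\langle\Sigma(\theta-\eta),\theta-\eta\rangle.$$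
   Context: $\|\cdot\|_{\mathrm{HS}}$ is the Hilbert–Schmidt (Frobenius) norm; $\succcurlyeq$ is the Loewner order on symmetric matrices. *)

theory Defs
  imports "HOL-Probability.Probability"
begin

definition psd_mat :: "real^'n^'n \<Rightarrow> bool" where
  "psd_mat A \<longleftrightarrow> transpose A = A \<and> (\<forall>x::real^'n. 0 \<le> x \<bullet> (A *v x))"

definition loewner_ge :: "real^'n^'n \<Rightarrow> real^'n^'n \<Rightarrow> bool" where
  "loewner_ge A B \<longleftrightarrow> psd_mat (A - B)"

definition psd_sqrt :: "real^'n^'n \<Rightarrow> real^'n^'n" where
  "psd_sqrt A = (THE S. psd_mat S \<and> S ** S = A)"

definition hs_norm :: "real^'n^'n \<Rightarrow> real" where
  "hs_norm A = sqrt (\<Sum>i\<in>UNIV. \<Sum>j\<in>UNIV. (A $ i $ j)\<^sup>2)"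

text \<open>Data: law rho on pairs (X,Y); X = fst, Y = snd.\<close>
definition resid :: "real^'n \<Rightarrow> (real^'n) \<times> real \<Rightarrow> real" where
  "resid \<theta> z = \<theta> \<bullet> fst z - snd z"

definition risk :: "((real^'n) \<times> real) measure \<Rightarrow> real^'n \<Rightarrow> real" where
  "risk \<rho> \<theta> = (1/2) * (\<integral>z. (resid \<theta> z)\<^sup>2 \<partial>\<rho>)"

definition second_moment :: "((real^'n) \<times> real) measure \<Rightarrow> real^'n^'n" where
  "second_moment \<rho> = (\<chi> i j. \<integral>z. fst z $ i * fst z $ j \<partial>\<rho>)"

definition noise_cov :: "((real^'n) \<times> real) measure \<Rightarrow> real^'n \<Rightarrow> real^'n^'n" where
  "noise_cov \<rho> \<theta> =
     (\<chi> i j. (\<integral>z. (resid \<theta> z)\<^sup>2 * fst z $ i * fst z $ j \<partial>\<rho>)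
            - (\<integral>z. resid \<theta> z * fst z $ i \<partial>\<rho>) * (\<integral>z. resid \<theta> z * fst z $ j \<partial>\<rho>))"

definition sigma_mat :: "((real^'n) \<times> real) measure \<Rightarrow> real^'n \<Rightarrow> real^'n^'n" where
  "sigma_mat \<rho> \<theta> = psd_sqrt (noise_cov \<rho> \<theta>)"

end

theory Submission
  imports Defs
begin


lemma quad_zero:
  fixes al be :: real
  assumes "\<And>t. t*al + t^2*be \<le> 0"
  shows "al = 0"
proof (rule ccontr)
  assume ne: "al \<noteq> 0"
  define sb where "sb = \<bar>be\<bar>+1"
  define t where "t = al / (2 * sb)"
  have d: "sb > 0" unfolding sb_def by simp
  have tal: "t*al = 2 * sb * t^2" unfolding t_def using d by (simp add: power2_eq_square field_simps)
  have "t \<noteq> 0" unfolding t_def using d ne by simp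
  hence tp: "t^2 > 0" by simp
  have "-be \<le> sb" unfolding sb_def by simp
  hence "t^2 * (-be) \<le> t^2 * sb" using tp by (intro mult_left_mono) auto
  moreover have "sb * t^2 > 0" using d tp by simp
  ultimately have "t*al + t^2*be > 0" using tal by (simp add: algebra_simps)
  with assms show False by (meson not_le)
qed

lemma sym_dot:
  fixes A :: "real^'n^'n"
  assumes "transpose A = A"
  shows "x \<bullet> (A *v y) = (A *v x) \<bullet> y"
  by (metis assms dot_lmul_matrix inner_commute transpose_transpose vector_transpose_matrix)

lemma sym_quad_expand:
  fixes A :: "real^'n^'n"
  assumes "transpose A = A"
  shows "(x + t *\<^sub>R y) \<bullet> (A *v (x + t *\<^sub>R y)) = x \<bullet> (A *v x) + 2*t*(y \<bullet> (A *v x)) + t^2 * (y \<bullet> (A *v y))"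
proof -
  have "x \<bullet> (A *v y) = y \<bullet> (A *v x)" using sym_dot[OF assms] by (simp add: inner_commute)
  then show ?thesis
    by (simp add: matrix_vector_right_distrib inner_add_left inner_add_right algebra_simps power2_eq_square scaleR_matrix_vector_assoc[symmetric] matrix_vector_mult_scaleR)
qed


lemma max_eigen:
  fixes A :: "real^'n^'n"
  assumes sym: "transpose A = A" and V: "subspace V"
    and inv: "\<forall>y\<in>V. A *v y \<in> V"
    and x: "x \<in> V" "norm x = 1"
    and mx: "\<forall>y\<in>V. norm y = 1 \<longrightarrow> y \<bullet> (A *v y) \<le> x \<bullet> (A *v x)"
  shows "A *v x = (x \<bullet> (A *v x)) *\<^sub>R x"
proof -
  define l where "l = x \<bullet> (A *v x)"
  have key: "(x + t *\<^sub>R y) \<bullet> (A *v (x + t *\<^sub>R y)) \<le> l * (norm (x + t *\<^sub>R y))^2"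
    if y: "y \<in> V" for y t
  proof -
    define z where "z = x + t *\<^sub>R y"
    have zV: "z \<in> V" unfolding z_def using V x y by (simp add: subspace_add subspace_scale)
    show ?thesis
    proof (cases "z = 0")
      case True then show ?thesis unfolding z_def[symmetric] by simp
    next
      case False
      define z' where "z' = (1 / norm z) *\<^sub>R z"
      have "z' \<in> V" unfolding z'_def using zV V by (simp add: subspace_scale)
      moreover have "norm z' = 1" unfolding z'_def using False by simp
      ultimately have "z' \<bullet> (A *v z') \<le> l" using mx l_def by blast
      moreover have "z' \<bullet> (A *v z') = (z \<bullet> (A *v z)) / (norm z)^2"
        unfolding z'_def by (simp add: scaleR_matrix_vector_assoc[symmetric] matrix_vector_mult_scaleR power2_eq_square)
      ultimately have "(z \<bullet> (A *v z)) / (norm z)^2 \<le> l" by simp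
      then show ?thesis unfolding z_def[symmetric] using False by (simp add: divide_le_eq)
    qed
  qed
  have orth: "y \<bullet> (A *v x) - l * (x \<bullet> y) = 0" if y: "y \<in> V" for y
  proof -
    have "t * (2 * (y \<bullet> (A *v x) - l * (x \<bullet> y))) + t^2 * (y \<bullet> (A *v y) - l * (y \<bullet> y)) \<le> 0" for t
    proof -
      have n: "(norm (x + t *\<^sub>R y))^2 = 1 + 2*t*(x \<bullet> y) + t^2 * (y \<bullet> y)"
      proof -
        have xx: "x \<bullet> x = 1" using x(2) by (simp add: power2_norm_eq_inner[symmetric])
        have "(norm (x + t *\<^sub>R y))^2 = (x + t *\<^sub>R y) \<bullet> (x + t *\<^sub>R y)" by (simp add: power2_norm_eq_inner)
        also have "... = x \<bullet> x + 2*t*(x \<bullet> y) + t^2 * (y \<bullet> y)"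
          by (simp add: inner_add_left inner_add_right inner_commute algebra_simps power2_eq_square)
        finally show ?thesis using xx by simp
      qed
      have "l + 2*t*(y \<bullet> (A *v x)) + t^2 * (y \<bullet> (A *v y)) \<le> l * (1 + 2*t*(x \<bullet> y) + t^2 * (y \<bullet> y))"
        using key[OF y, of t] unfolding n sym_quad_expand[OF sym] l_def by simp
      then show ?thesis by (simp add: algebra_simps)
    qed
    then have "2 * (y \<bullet> (A *v x) - l * (x \<bullet> y)) = 0" by (rule quad_zero)
    then show ?thesis by simp
  qed
  define w where "w = A *v x - l *\<^sub>R x"
  have "A *v x \<in> V" using inv x by blast
  hence wV: "w \<in> V" unfolding w_def using V x by (simp add: subspace_diff subspace_scale)
  have "w \<bullet> w = w \<bullet> (A *v x) - l * (x \<bullet> w)" unfolding w_def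
    by (simp add: inner_diff_right inner_diff_left inner_commute algebra_simps)
  hence "w \<bullet> w = 0" using orth[OF wV] by simp
  hence "w = 0" by simp
  then show ?thesis unfolding w_def l_def by simp
qed


lemma spectral_sub:
  fixes A :: "real^'n^'n"
  assumes sym: "transpose A = A"
  shows "subspace V \<Longrightarrow> (\<forall>y\<in>V. A *v y \<in> V) \<Longrightarrow>
    \<exists>B. finite B \<and> B \<subseteq> V \<and> (\<forall>b\<in>B. norm b = 1 \<and> A *v b = (b \<bullet> (A *v b)) *\<^sub>R b)
      \<and> (\<forall>b\<in>B. \<forall>c\<in>B. b \<noteq> c \<longrightarrow> b \<bullet> c = 0) \<and> (\<forall>y\<in>V. y = (\<Sum>b\<in>B. (b \<bullet> y) *\<^sub>R b))"
proof (induction "dim V" arbitrary: V rule: less_induct)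
  case less
  note V = less.prems(1) and inv = less.prems(2)
  show ?case
  proof (cases "V \<subseteq> {0}")
    case True
    show ?thesis by (rule exI[of _ "{}"]) (use True in auto)
  next
    case False
    then obtain y0 where y0: "y0 \<in> V" "y0 \<noteq> 0" by auto
    define S where "S = V \<inter> sphere 0 1"
    have "compact S" unfolding S_def using V
      by (metis closed_Int_compact closed_subspace compact_sphere)
    moreover have "S \<noteq> {}"
    proof -
      have "(1 / norm y0) *\<^sub>R y0 \<in> S" unfolding S_def using y0 V by (simp add: subspace_scale)
      then show ?thesis by blast
    qed
    moreover have "continuous_on S (\<lambda>y. y \<bullet> (A *v y))"
    proof -
      have bl: "bounded_linear ((*v) A)" using matrix_vector_mul_linear[of A]
        by (simp add: linear_conv_bounded_linear)
      show ?thesis by (intro continuous_on_inner continuous_on_id linear_continuous_on bl)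
    qed
    ultimately obtain x where xS: "x \<in> S" and xm: "\<forall>y\<in>S. y \<bullet> (A *v y) \<le> x \<bullet> (A *v x)"
      using continuous_attains_sup by blast
    have xV: "x \<in> V" and nx: "norm x = 1" using xS unfolding S_def by auto
    have eig: "A *v x = (x \<bullet> (A *v x)) *\<^sub>R x"
      by (rule max_eigen[OF sym V inv xV nx]) (use xm in \<open>auto simp: S_def\<close>)
    define W where "W = {y \<in> V. x \<bullet> y = 0}"
    have W: "subspace W" unfolding W_def subspace_def using V
      by (auto simp: subspace_add subspace_scale subspace_0 inner_add_right)
    have invW: "\<forall>y\<in>W. A *v y \<in> W"
    proof
      fix y assume y: "y \<in> W"
      have "x \<bullet> (A *v y) = (A *v x) \<bullet> y" by (rule sym_dot[OF sym])
      also have "... = 0" using y unfolding W_def by (subst eig) simp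
      finally show "A *v y \<in> W" using y inv unfolding W_def by auto
    qed
    have xx: "x \<bullet> x = 1" using nx by (simp add: power2_norm_eq_inner[symmetric])
    have "x \<notin> W" unfolding W_def using xx by auto
    moreover have "W \<subseteq> V" unfolding W_def by auto
    ultimately have "W \<subset> V" using xV by blast
    moreover have "span W = W" using span_eq_iff[THEN iffD2, OF W] .
    moreover have "span V = V" using span_eq_iff[THEN iffD2, OF V] .
    ultimately have "span W \<subset> span V" by (simp only:)
    hence "dim W < dim V" by (rule dim_psubset)
    from less.hyps[OF this W invW] obtain B where
      B: "finite B" "B \<subseteq> W" "\<forall>b\<in>B. norm b = 1 \<and> A *v b = (b \<bullet> (A *v b)) *\<^sub>R b"
         "\<forall>b\<in>B. \<forall>c\<in>B. b \<noteq> c \<longrightarrow> b \<bullet> c = 0" "\<forall>y\<in>W. y = (\<Sum>b\<in>B. (b \<bullet> y) *\<^sub>R b)"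
      by blast
    have xB: "x \<notin> B" using B(2) xx unfolding W_def by auto
    have bx: "b \<bullet> x = 0" if "b \<in> B" for b using B(2) that unfolding W_def by (auto simp: inner_commute)
    show ?thesis
    proof (intro exI[of _ "insert x B"] conjI)
      show "finite (insert x B)" using B(1) by simp
      show "insert x B \<subseteq> V" using B(2) xV unfolding W_def by auto
      show "\<forall>b\<in>insert x B. norm b = 1 \<and> A *v b = (b \<bullet> (A *v b)) *\<^sub>R b" using B(3) nx eig by auto
      show "\<forall>b\<in>insert x B. \<forall>c\<in>insert x B. b \<noteq> c \<longrightarrow> b \<bullet> c = 0"
        using B(4) bx by (auto simp: inner_commute)
      show "\<forall>y\<in>V. y = (\<Sum>b\<in>insert x B. (b \<bullet> y) *\<^sub>R b)"
      proof
        fix y assume yV: "y \<in> V"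
        define w where "w = y - (x \<bullet> y) *\<^sub>R x"
        have "w \<in> W" unfolding W_def w_def using yV xV V xx
          by (simp add: subspace_diff subspace_scale inner_diff_right)
        hence "w = (\<Sum>b\<in>B. (b \<bullet> w) *\<^sub>R b)" using B(5) by blast
        also have "... = (\<Sum>b\<in>B. (b \<bullet> y) *\<^sub>R b)"
          by (rule sum.cong) (auto simp: w_def inner_diff_right bx)
        finally have "y = (x \<bullet> y) *\<^sub>R x + (\<Sum>b\<in>B. (b \<bullet> y) *\<^sub>R b)" unfolding w_def by (simp add: algebra_simps)
        then show "y = (\<Sum>b\<in>insert x B. (b \<bullet> y) *\<^sub>R b)" using B(1) xB by simp
      qed
    qed
  qed
qed


definition onb :: "(real^'n) set \<Rightarrow> bool" where
  "onb B \<longleftrightarrow> finite B \<and> (\<forall>b\<in>B. norm b = 1) \<and> (\<forall>b\<in>B. \<forall>c\<in>B. b \<noteq> c \<longrightarrow> b \<bullet> c = 0)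
     \<and> (\<forall>y. y = (\<Sum>b\<in>B. (b \<bullet> y) *\<^sub>R b))"

lemma spectral:
  fixes A :: "real^'n^'n"
  assumes sym: "transpose A = A"
  shows "\<exists>B. onb B \<and> (\<forall>b\<in>B. A *v b = (b \<bullet> (A *v b)) *\<^sub>R b)"
  using spectral_sub[OF sym, of UNIV] unfolding onb_def by auto

definition outer :: "real^'n \<Rightarrow> real^'n^'n" where
  "outer b = (\<chi> i j. b$i * b$j)"

definition specM :: "(real^'n) set \<Rightarrow> (real^'n \<Rightarrow> real) \<Rightarrow> real^'n^'n" where
  "specM B f = (\<Sum>b\<in>B. f b *\<^sub>R outer b)"

lemma outer_mult: "outer b *v x = (b \<bullet> x) *\<^sub>R b"
  by (simp add: outer_def matrix_vector_mult_def inner_vec_def vec_eq_iff sum_distrib_left mult.assoc mult.commute mult.left_commute)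

lemma sum_matrix_vector: "finite B \<Longrightarrow> (\<Sum>b\<in>B. M b) *v x = (\<Sum>b\<in>B. M b *v x)"
  by (induction B rule: finite_induct) (simp_all add: matrix_vector_mult_add_rdistrib)

lemma specM_mult: "finite B \<Longrightarrow> specM B f *v x = (\<Sum>b\<in>B. (f b * (b \<bullet> x)) *\<^sub>R b)"
  unfolding specM_def by (simp add: sum_matrix_vector scaleR_matrix_vector_assoc[symmetric] outer_mult)

lemma specM_transpose: "transpose (specM B f) = specM B f"
  by (simp add: specM_def vec_eq_iff transpose_def sum_component outer_def mult.commute)

lemma onb_coeff:
  assumes "onb B" "c \<in> B"
  shows "c \<bullet> (\<Sum>b\<in>B. g b *\<^sub>R b) = g c"
proof -
  have fin: "finite B" and n: "norm c = 1" and o: "\<And>b. b \<in> B \<Longrightarrow> b \<noteq> c \<Longrightarrow> c \<bullet> b = 0"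
    using assms unfolding onb_def by auto
  have cc: "c \<bullet> c = 1" using n by (simp add: power2_norm_eq_inner[symmetric])
  have "c \<bullet> (\<Sum>b\<in>B. g b *\<^sub>R b) = (\<Sum>b\<in>B. g b * (c \<bullet> b))" by (simp add: inner_sum_right)
  also have "... = g c * (c \<bullet> c) + (\<Sum>b\<in>B - {c}. g b * (c \<bullet> b))"
    using fin assms(2) by (simp add: sum.remove)
  also have "(\<Sum>b\<in>B - {c}. g b * (c \<bullet> b)) = 0" using o by (intro sum.neutral) auto
  finally show ?thesis using cc by simp
qed

lemma specM_quad: "finite B \<Longrightarrow> x \<bullet> (specM B f *v x) = (\<Sum>b\<in>B. f b * (b \<bullet> x)^2)"
  by (simp add: specM_mult inner_sum_right power2_eq_square inner_commute mult.assoc)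

lemma onb_parseval: "onb B \<Longrightarrow> x \<bullet> x = (\<Sum>b\<in>B. (b \<bullet> x)^2)"
proof -
  assume B: "onb B"
  have "x \<bullet> x = x \<bullet> (\<Sum>b\<in>B. (b \<bullet> x) *\<^sub>R b)" using B unfolding onb_def by metis
  also have "... = (\<Sum>b\<in>B. (b \<bullet> x)^2)" by (simp add: inner_sum_right power2_eq_square inner_commute)
  finally show ?thesis .
qed

lemma spec_repr:
  fixes A :: "real^'n^'n"
  assumes B: "onb B" and eig: "\<forall>b\<in>B. A *v b = lam b *\<^sub>R b"
  shows "A = specM B lam"
proof -
  have fin: "finite B" using B unfolding onb_def by auto
  have "A *v x = specM B lam *v x" for x
  proof -
    have "A *v x = A *v (\<Sum>b\<in>B. (b \<bullet> x) *\<^sub>R b)" using B unfolding onb_def by metis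
    also have "... = (\<Sum>b\<in>B. (b \<bullet> x) *\<^sub>R (A *v b))" by (simp add: vec.sum matrix_vector_mult_scaleR)
    also have "... = (\<Sum>b\<in>B. (lam b * (b \<bullet> x)) *\<^sub>R b)" using eig by (intro sum.cong) (auto simp: mult.commute)
    finally show ?thesis using specM_mult[OF fin] by simp
  qed
  then show ?thesis by (simp add: matrix_eq)
qed


lemma psd_kernel:
  fixes P :: "real^'n^'n"
  assumes P: "psd_mat P" and x: "x \<bullet> (P *v x) = 0"
  shows "P *v x = 0"
proof -
  have sym: "transpose P = P" using P unfolding psd_mat_def by auto
  have "y \<bullet> (P *v x) = 0" for y
  proof -
    have "t * (-2 * (y \<bullet> (P *v x))) + t^2 * (-(y \<bullet> (P *v y))) \<le> 0" for t
    proof -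
      have "0 \<le> (x + t *\<^sub>R y) \<bullet> (P *v (x + t *\<^sub>R y))" using P unfolding psd_mat_def by blast
      then show ?thesis unfolding sym_quad_expand[OF sym] x by simp
    qed
    hence "-2 * (y \<bullet> (P *v x)) = 0" by (rule quad_zero)
    then show ?thesis by simp
  qed
  from this[of "P *v x"] show ?thesis by simp
qed

lemma psd_quad_nonneg: "psd_mat P \<Longrightarrow> 0 \<le> x \<bullet> (P *v x)"
  unfolding psd_mat_def by blast

lemma sqrt_exists:
  fixes A :: "real^'n^'n"
  assumes A: "psd_mat A"
  shows "\<exists>S. psd_mat S \<and> S ** S = A"
proof -
  have sym: "transpose A = A" using A unfolding psd_mat_def by auto
  obtain B where B: "onb B" and eig: "\<forall>b\<in>B. A *v b = (b \<bullet> (A *v b)) *\<^sub>R b"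
    using spectral[OF sym] by blast
  have fin: "finite B" using B unfolding onb_def by auto
  define lam where "lam b = b \<bullet> (A *v b)" for b
  have lam0: "lam b \<ge> 0" for b unfolding lam_def using A by (rule psd_quad_nonneg)
  have Arep: "A = specM B lam" by (rule spec_repr[OF B]) (use eig in \<open>simp add: lam_def\<close>)
  define S where "S = specM B (\<lambda>b. sqrt (lam b))"
  have "psd_mat S" unfolding psd_mat_def S_def
    by (simp add: specM_transpose specM_quad[OF fin] lam0 sum_nonneg)
  moreover have "S ** S = A"
  proof -
    have "(S ** S) *v x = A *v x" for x
    proof -
      have "(S ** S) *v x = S *v (S *v x)" by (simp add: matrix_vector_mul_assoc)
      also have "... = (\<Sum>b\<in>B. (sqrt (lam b) * (b \<bullet> (S *v x))) *\<^sub>R b)"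
        unfolding S_def by (rule specM_mult[OF fin])
      also have "... = (\<Sum>b\<in>B. (lam b * (b \<bullet> x)) *\<^sub>R b)"
      proof (rule sum.cong[OF refl])
        fix b assume b: "b \<in> B"
        have "b \<bullet> (S *v x) = sqrt (lam b) * (b \<bullet> x)"
          unfolding S_def specM_mult[OF fin] by (rule onb_coeff[OF B b])
        then show "(sqrt (lam b) * (b \<bullet> (S *v x))) *\<^sub>R b = (lam b * (b \<bullet> x)) *\<^sub>R b"
          using lam0[of b] by (simp add: mult.assoc[symmetric])
      qed
      also have "... = A *v x" unfolding Arep by (simp add: specM_mult[OF fin])
      finally show ?thesis .
    qed
    then show ?thesis by (simp add: matrix_eq)
  qed
  ultimately show ?thesis by blast
qed

lemma transpose_diff: "transpose (M - N) = transpose M - (transpose N :: real^'n^'n)"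
  by (simp add: vec_eq_iff transpose_def)

lemma sqrt_unique:
  fixes S1 S2 :: "real^'n^'n"
  assumes P1: "psd_mat S1" and P2: "psd_mat S2" and eq: "S1 ** S1 = S2 ** S2"
  shows "S1 = S2"
proof -
  define X where "X = S1 - S2"
  have sym1: "transpose S1 = S1" and sym2: "transpose S2 = S2" using P1 P2 unfolding psd_mat_def by auto
  have symX: "transpose X = X" unfolding X_def transpose_diff sym1 sym2 ..
  obtain B where B: "onb B" and eig: "\<forall>b\<in>B. X *v b = (b \<bullet> (X *v b)) *\<^sub>R b"
    using spectral[OF symX] by blast
  have fin: "finite B" using B unfolding onb_def by auto
  have zero: "b \<bullet> (X *v b) = 0" if b: "b \<in> B" for b
  proof (rule ccontr)
    define nu where "nu = b \<bullet> (X *v b)"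
    assume "b \<bullet> (X *v b) \<noteq> 0"
    hence nu0: "nu \<noteq> 0" unfolding nu_def .
    have Xb: "X *v b = nu *\<^sub>R b" using eig b unfolding nu_def by blast
    have Xv: "X *v v = S1 *v v - S2 *v v" for v unfolding X_def by (simp add: matrix_vector_mult_diff_rdistrib)
    have "S1 *v (S1 *v b) = S2 *v (S2 *v b)" using eq by (simp add: matrix_vector_mul_assoc)
    hence "S1 *v (X *v b) + X *v (S2 *v b) = 0"
      unfolding Xv by (simp add: matrix_vector_mult_diff_distrib)
    hence "b \<bullet> (S1 *v (X *v b)) + b \<bullet> (X *v (S2 *v b)) = 0" by (metis inner_add_right inner_zero_right)
    moreover have "b \<bullet> (X *v (S2 *v b)) = (X *v b) \<bullet> (S2 *v b)" by (rule sym_dot[OF symX])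
    ultimately have "nu * (b \<bullet> (S1 *v b) + b \<bullet> (S2 *v b)) = 0"
      unfolding Xb by (simp add: matrix_vector_mult_scaleR algebra_simps)
    hence "b \<bullet> (S1 *v b) + b \<bullet> (S2 *v b) = 0" using nu0 by simp
    moreover have "b \<bullet> (S1 *v b) \<ge> 0" "b \<bullet> (S2 *v b) \<ge> 0"
      using P1 P2 by (simp_all add: psd_quad_nonneg)
    ultimately have "b \<bullet> (S1 *v b) = 0" "b \<bullet> (S2 *v b) = 0" by linarith+
    hence "S1 *v b = 0" "S2 *v b = 0" using psd_kernel P1 P2 by blast+
    hence "nu *\<^sub>R b = 0" using Xb Xv by simp
    moreover have "b \<noteq> 0" using B b unfolding onb_def by auto
    ultimately show False using nu0 by simp
  qed
  have "X = specM B (\<lambda>b. b \<bullet> (X *v b))" using spec_repr[OF B eig] .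
  also have "... = specM B (\<lambda>b. 0)" unfolding specM_def using zero by (intro sum.cong) auto
  also have "... = 0" unfolding specM_def by simp
  finally show ?thesis unfolding X_def by simp
qed

lemma psd_sqrt_props:
  fixes A :: "real^'n^'n"
  assumes "psd_mat A"
  shows "psd_mat (psd_sqrt A) \<and> psd_sqrt A ** psd_sqrt A = A"
proof -
  have "\<exists>!S. psd_mat S \<and> S ** S = A" using sqrt_exists[OF assms] sqrt_unique by metis
  then show ?thesis unfolding psd_sqrt_def by (rule theI')
qed

lemma sqrt_lower:
  fixes sg :: "real^'n^'n"
  assumes P: "psd_mat sg" and L: "loewner_ge (sg ** sg) (mu *\<^sub>R mat 1)" and mu: "mu \<ge> 0"
  shows "x \<bullet> (sg *v x) \<ge> sqrt mu * (x \<bullet> x)"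
proof -
  have sym: "transpose sg = sg" using P unfolding psd_mat_def by auto
  obtain B where B: "onb B" and eig: "\<forall>b\<in>B. sg *v b = (b \<bullet> (sg *v b)) *\<^sub>R b"
    using spectral[OF sym] by blast
  have fin: "finite B" using B unfolding onb_def by auto
  define lam where "lam b = b \<bullet> (sg *v b)" for b
  have lam0: "lam b \<ge> 0" for b unfolding lam_def using P by (rule psd_quad_nonneg)
  have rep: "sg = specM B lam" by (rule spec_repr[OF B]) (use eig in \<open>simp add: lam_def\<close>)
  have lb: "lam b \<ge> sqrt mu" if b: "b \<in> B" for b
  proof -
    have eb: "sg *v b = lam b *\<^sub>R b" using eig b unfolding lam_def by blast
    have bb: "b \<bullet> b = 1" using B b unfolding onb_def by (auto simp: power2_norm_eq_inner[symmetric])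
    have "0 \<le> b \<bullet> ((sg ** sg - mu *\<^sub>R mat 1) *v b)" using L unfolding loewner_ge_def psd_mat_def by blast
    also have "... = (lam b)^2 - mu"
      by (simp add: matrix_vector_mult_diff_rdistrib matrix_vector_mul_assoc[symmetric] eb
          matrix_vector_mult_scaleR scaleR_matrix_vector_assoc[symmetric] inner_diff_right bb power2_eq_square)
    finally have "mu \<le> (lam b)^2" by simp
    hence "sqrt mu \<le> sqrt ((lam b)^2)" by (rule real_sqrt_le_mono)
    then show ?thesis using lam0[of b] by simp
  qed
  have "sqrt mu * (x \<bullet> x) = (\<Sum>b\<in>B. sqrt mu * (b \<bullet> x)^2)" using onb_parseval[OF B] by (simp add: sum_distrib_left)
  also have "... \<le> (\<Sum>b\<in>B. lam b * (b \<bullet> x)^2)" using lb by (intro sum_mono mult_right_mono) auto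
  also have "... = x \<bullet> (sg *v x)" unfolding rep specM_quad[OF fin] ..
  finally show ?thesis .
qed


lemma mat_row_sym:
  fixes s M :: "real^'n^'n"
  assumes "transpose s = s"
  shows "(M ** s) $ i = s *v (M $ i)"
proof -
  have sy: "s $ k $ j = s $ j $ k" for k j using assms by (metis transpose_def vec_lambda_beta)
  have "(M ** s)$i$j = (s *v M$i)$j" for j
  proof -
    have "(M ** s)$i$j = (\<Sum>k\<in>UNIV. M$i$k * s$k$j)" by (simp add: matrix_matrix_mult_def)
    also have "... = (\<Sum>k\<in>UNIV. s$j$k * M$i$k)" by (rule sum.cong[OF refl]) (metis sy mult.commute)
    also have "... = (s *v M$i)$j" by (simp add: matrix_vector_mult_def)
    finally show ?thesis .
  qed
  then show ?thesis by (simp add: vec_eq_iff)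
qed

lemma inner_mat: "(M::real^'n^'m) \<bullet> N = (\<Sum>i\<in>UNIV. \<Sum>j\<in>UNIV. M$i$j * N$i$j)"
  by (simp add: inner_vec_def inner_real_def)

lemma inner_transpose: "transpose M \<bullet> transpose N = (M::real^'n^'n) \<bullet> N"
proof -
  have "transpose M \<bullet> transpose N = (\<Sum>i\<in>UNIV. \<Sum>j\<in>UNIV. M$j$i * N$j$i)"
    by (simp add: inner_mat transpose_def)
  also have "... = (\<Sum>j\<in>UNIV. \<Sum>i\<in>UNIV. M$j$i * N$j$i)" by (rule sum.swap)
  also have "... = M \<bullet> N" by (simp add: inner_mat)
  finally show ?thesis .
qed

lemma frob_lower:
  fixes s M :: "real^'n^'n"
  assumes sym: "transpose s = s" and lb: "\<forall>x. l * (x \<bullet> x) \<le> x \<bullet> (s *v x)"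
  shows "l * (M \<bullet> M) \<le> M \<bullet> (M ** s)"
proof -
  have "l * (M \<bullet> M) = (\<Sum>i\<in>UNIV. l * (M$i \<bullet> M$i))" by (simp add: inner_vec_def sum_distrib_left)
  also have "... \<le> (\<Sum>i\<in>UNIV. M$i \<bullet> (s *v M$i))" using lb by (intro sum_mono) auto
  also have "... = M \<bullet> (M ** s)" by (simp add: inner_vec_def mat_row_sym[OF sym])
  finally show ?thesis .
qed

lemma sqrt_perturb:
  fixes s1 s2 :: "real^'n^'n"
  assumes sym1: "transpose s1 = s1" and sym2: "transpose s2 = s2"
    and lb1: "\<forall>x. l1 * (x \<bullet> x) \<le> x \<bullet> (s1 *v x)"
    and lb2: "\<forall>x. l2 * (x \<bullet> x) \<le> x \<bullet> (s2 *v x)"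
  shows "(l1 + l2) * ((s1 - s2) \<bullet> (s1 - s2)) \<le> (s1 - s2) \<bullet> (s1 ** s1 - s2 ** s2)"
proof -
  define X where "X = s1 - s2"
  have symX: "transpose X = X" unfolding X_def transpose_diff sym1 sym2 ..
  have dec: "s1 ** s1 - s2 ** s2 = s1 ** X + X ** s2"
    unfolding X_def matrix_eq
    by (simp add: matrix_vector_mult_add_rdistrib matrix_vector_mult_diff_rdistrib
        matrix_vector_mul_assoc[symmetric] matrix_vector_mult_diff_distrib)
  have "X \<bullet> (s1 ** X) = transpose X \<bullet> transpose (s1 ** X)" by (simp add: inner_transpose)
  also have "... = X \<bullet> (X ** s1)" by (simp add: matrix_transpose_mul symX sym1)
  finally have e1: "X \<bullet> (s1 ** X) = X \<bullet> (X ** s1)" .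
  have "l1 * (X \<bullet> X) \<le> X \<bullet> (X ** s1)" by (rule frob_lower[OF sym1 lb1])
  moreover have "l2 * (X \<bullet> X) \<le> X \<bullet> (X ** s2)" by (rule frob_lower[OF sym2 lb2])
  ultimately show ?thesis unfolding X_def[symmetric] dec inner_add_right e1 by (simp add: algebra_simps)
qed

lemma hs_norm_sq: "(hs_norm M)^2 = M \<bullet> M"
  unfolding hs_norm_def inner_mat by (simp add: sum_nonneg power2_eq_square)

lemma norm_mv: "norm ((W::real^'n^'m) *v x) \<le> norm W * norm x"
proof -
  have c: "(W *v x) $ i = W$i \<bullet> x" for i by (simp add: matrix_vector_mult_def inner_vec_def inner_real_def)
  have "(norm (W *v x))^2 = (\<Sum>i\<in>UNIV. ((W *v x)$i)^2)"
    unfolding power2_norm_eq_inner by (simp add: inner_vec_def inner_real_def power2_eq_square)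
  also have "... = (\<Sum>i\<in>UNIV. (W$i \<bullet> x)^2)" unfolding c ..
  also have "... \<le> (\<Sum>i\<in>UNIV. (norm (W$i))^2 * (norm x)^2)"
  proof (intro sum_mono)
    fix i
    have "\<bar>W$i \<bullet> x\<bar> \<le> norm (W$i) * norm x" by (rule Cauchy_Schwarz_ineq2)
    hence "\<bar>W$i \<bullet> x\<bar>^2 \<le> (norm (W$i) * norm x)^2" by (rule power_mono) simp
    then show "(W$i \<bullet> x)^2 \<le> (norm (W$i))^2 * (norm x)^2" by (simp add: power_mult_distrib)
  qed
  also have "... = (norm W * norm x)^2"
    unfolding power_mult_distrib sum_distrib_right[symmetric] power2_norm_eq_inner[of W] by (simp add: inner_vec_def power2_norm_eq_inner)
  finally show ?thesis by (rule power2_le_imp_le) simp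
qed




lemma cs_real:
  fixes x A B :: real
  assumes A: "A \<ge> 0" and B: "B \<ge> 0" and h: "\<And>t. t > 0 \<Longrightarrow> x \<le> (t * A + B / t) / 2"
  shows "x \<le> sqrt A * sqrt B"
proof (cases "A > 0 \<and> B > 0")
  case True
  define t where "t = sqrt B / sqrt A"
  have tp: "t > 0" unfolding t_def using True by simp
  have "t * A = sqrt A * sqrt B" unfolding t_def using True
    by (simp add: field_simps)
  moreover have "B / t = sqrt A * sqrt B" unfolding t_def using True
    by (simp add: field_simps)
  ultimately show ?thesis using h[OF tp] by simp
next
  case False
  hence z: "A = 0 \<or> B = 0" using A B by auto
  have "x \<le> 0"
  proof (rule ccontr)
    assume "\<not> x \<le> 0" hence xp: "x > 0" by simp
    show False
    proof (cases "A = 0")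
      case True
      define t where "t = (B + 1) / x"
      have tp: "t > 0" unfolding t_def using xp B by simp
      have Bx: "B * x \<ge> 0" using B xp by simp
      have "B / t = (B / (B+1)) * x" unfolding t_def using xp B by (simp add: field_simps)
      also have "... \<le> 1 * x" using B xp by (intro mult_right_mono) auto
      also have "... < 2 * x" using xp by simp
      finally have "B / t < 2 * x" .
      with h[OF tp] True show False by simp
    next
      case False
      hence B0: "B = 0" using z by simp
      define t where "t = x / (A + 1)"
      have tp: "t > 0" unfolding t_def using xp A by simp
      have "t * A = (A / (A+1)) * x" unfolding t_def using xp A by (simp add: field_simps)
      also have "... \<le> 1 * x" using A xp by (intro mult_right_mono) auto
      also have "... < 2 * x" using xp by simp
      finally have "t * A < 2 * x" .
      with h[OF tp] B0 show False by simp
    qed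
  qed
  then show ?thesis using z by auto
qed

definition L2 :: "'a measure \<Rightarrow> ('a \<Rightarrow> real) \<Rightarrow> bool" where
  "L2 M f \<longleftrightarrow> f \<in> borel_measurable M \<and> integrable M (\<lambda>z. (f z)^2)"

definition mvec :: "((real^'n) \<times> real) measure \<Rightarrow> ((real^'n) \<times> real \<Rightarrow> real) \<Rightarrow> real^'n" where
  "mvec rho f = (\<chi> i. \<integral>z. f z * fst z $ i \<partial>rho)"

locale dat = prob_space rho for rho :: "((real^'n) \<times> real) measure" +
  fixes K :: real
  assumes S: "sets rho = sets borel"
    and Y2: "integrable rho (\<lambda>z. (snd z)^2)"
    and XK: "AE z in rho. (norm (fst z))^2 \<le> K"
begin

lemma meas: "continuous_on UNIV f \<Longrightarrow> f \<in> borel_measurable rho"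
  using measurable_cong_sets[OF S refl] borel_measurable_continuous_onI by blast

lemma K0: "K \<ge> 0"
proof -
  have "AE z in rho. 0 \<le> K" using XK by eventually_elim (use zero_le_power2 in \<open>blast intro: order_trans\<close>)
  then show ?thesis by simp
qed

lemma XsK: "AE z in rho. norm (fst z) \<le> sqrt K"
  using XK by eventually_elim (metis real_sqrt_abs real_sqrt_le_mono abs_norm_cancel)

lemma L2_int: "L2 rho f \<Longrightarrow> integrable rho f"
  unfolding L2_def by (blast intro: square_integrable_imp_integrable)

lemma L2_sq: "L2 rho f \<Longrightarrow> integrable rho (\<lambda>z. (f z)^2)"
  unfolding L2_def by blast

lemma L2_meas: "L2 rho f \<Longrightarrow> f \<in> borel_measurable rho"
  unfolding L2_def by blast

lemma L2_bdd:
  assumes "f \<in> borel_measurable rho" "AE z in rho. \<bar>f z\<bar> \<le> C"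
  shows "L2 rho f"
  unfolding L2_def
proof (intro conjI assms(1) integrable_const_bound[where B = "C^2"])
  show "AE z in rho. norm ((f z)^2) \<le> C^2" using assms(2)
  proof eventually_elim
    case (elim z)
    have "\<bar>f z\<bar>^2 \<le> C^2" by (rule power_mono) (use elim in auto)
    then show ?case by simp
  qed
  show "(\<lambda>z. (f z)^2) \<in> borel_measurable rho" using assms(1) by measurable
qed

lemma L2_add:
  assumes f: "L2 rho f" and g: "L2 rho g"
  shows "L2 rho (\<lambda>z. f z + g z)"
  unfolding L2_def
proof (intro conjI)
  show m: "(\<lambda>z. f z + g z) \<in> borel_measurable rho" using f g unfolding L2_def by (intro borel_measurable_add) auto
  show "integrable rho (\<lambda>z. (f z + g z)^2)"
  proof (rule Bochner_Integration.integrable_bound[OF _ _ ])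
    show "integrable rho (\<lambda>z. 2 * (f z)^2 + 2 * (g z)^2)" using f g unfolding L2_def by simp
    show "(\<lambda>z. (f z + g z)^2) \<in> borel_measurable rho" using m by measurable
    show "AE z in rho. norm ((f z + g z)^2) \<le> norm (2 * (f z)^2 + 2 * (g z)^2)"
    proof (rule AE_I2)
      fix z
      have "(f z + g z)^2 \<le> 2 * (f z)^2 + 2 * (g z)^2"
        using zero_le_power2[of "f z - g z"] by (simp add: power2_eq_square algebra_simps)
      then show "norm ((f z + g z)^2) \<le> norm (2 * (f z)^2 + 2 * (g z)^2)" by simp
    qed
  qed
qed

lemma L2_scale:
  assumes f: "L2 rho f"
  shows "L2 rho (\<lambda>z. c * f z)"
  using f unfolding L2_def by (auto simp: power_mult_distrib)

lemma L2_neg: "L2 rho f \<Longrightarrow> L2 rho (\<lambda>z. - f z)"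
  unfolding L2_def by auto

lemma L2_diff: "L2 rho f \<Longrightarrow> L2 rho g \<Longrightarrow> L2 rho (\<lambda>z. f z - g z)"
  using L2_add[of f "\<lambda>z. - g z"] L2_neg by simp

lemma L2_mult_bdd:
  assumes f: "L2 rho f" and g: "g \<in> borel_measurable rho" and gb: "AE z in rho. \<bar>g z\<bar> \<le> C"
  shows "L2 rho (\<lambda>z. f z * g z)"
  unfolding L2_def
proof (intro conjI)
  show m: "(\<lambda>z. f z * g z) \<in> borel_measurable rho" using f g unfolding L2_def by (intro borel_measurable_times) auto
  show "integrable rho (\<lambda>z. (f z * g z)^2)"
  proof (rule Bochner_Integration.integrable_bound[OF _ _])
    show "integrable rho (\<lambda>z. C^2 * (f z)^2)" using f unfolding L2_def by simp
    show "(\<lambda>z. (f z * g z)^2) \<in> borel_measurable rho" using m by measurable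
    show "AE z in rho. norm ((f z * g z)^2) \<le> norm (C^2 * (f z)^2)" using gb
    proof eventually_elim
      case (elim z)
      have "\<bar>g z\<bar>^2 \<le> C^2" by (rule power_mono) (use elim in auto)
      hence "(g z)^2 \<le> C^2" by simp
      hence "(f z)^2 * (g z)^2 \<le> (f z)^2 * C^2" by (rule mult_left_mono) simp
      then show ?case by (simp add: power_mult_distrib mult.commute)
    qed
  qed
qed

lemma L2_prod:
  assumes f: "L2 rho f" and g: "L2 rho g"
  shows "integrable rho (\<lambda>z. f z * g z)"
proof -
  have i: "integrable rho (\<lambda>z. (f z)^2 + (g z)^2)" using f g unfolding L2_def by simp
  have m: "(\<lambda>z. f z * g z) \<in> borel_measurable rho" using f g unfolding L2_def by (intro borel_measurable_times) auto
  have ae: "AE z in rho. norm (f z * g z) \<le> norm ((f z)^2 + (g z)^2)"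
  proof (rule AE_I2)
    fix z
    have "2 * (\<bar>f z\<bar> * \<bar>g z\<bar>) \<le> (f z)^2 + (g z)^2"
      using zero_le_power2[of "\<bar>f z\<bar> - \<bar>g z\<bar>"] by (simp add: power2_eq_square algebra_simps)
    moreover have "0 \<le> \<bar>f z\<bar> * \<bar>g z\<bar>" by simp
    ultimately have "\<bar>f z * g z\<bar> \<le> (f z)^2 + (g z)^2" unfolding abs_mult by linarith
    then show "norm (f z * g z) \<le> norm ((f z)^2 + (g z)^2)" by simp
  qed
  show ?thesis by (rule Bochner_Integration.integrable_bound[OF i m ae])
qed

lemma L2_abs_prod:
  assumes f: "L2 rho f" and g: "L2 rho g"
  shows "integrable rho (\<lambda>z. \<bar>f z * g z\<bar>)"
  using L2_prod[OF f g] by (rule integrable_abs)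

lemma cs:
  assumes f: "L2 rho f" and g: "L2 rho g"
  shows "(\<integral>z. \<bar>f z * g z\<bar> \<partial>rho) \<le> sqrt (\<integral>z. (f z)^2 \<partial>rho) * sqrt (\<integral>z. (g z)^2 \<partial>rho)"
proof (rule cs_real)
  show "0 \<le> (\<integral>z. (f z)^2 \<partial>rho)" "0 \<le> (\<integral>z. (g z)^2 \<partial>rho)" by simp_all
  fix t :: real assume t: "t > 0"
  have "(\<integral>z. \<bar>f z * g z\<bar> \<partial>rho) \<le> (\<integral>z. (t * (f z)^2 + (g z)^2 / t) / 2 \<partial>rho)"
  proof (rule integral_mono)
    show "integrable rho (\<lambda>z. \<bar>f z * g z\<bar>)" by (rule L2_abs_prod[OF f g])
    show "integrable rho (\<lambda>z. (t * (f z)^2 + (g z)^2 / t) / 2)" using f g unfolding L2_def by simp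
    fix z
    have "0 \<le> (t * \<bar>f z\<bar> - \<bar>g z\<bar>)^2 / t" using t by simp
    also have "(t * \<bar>f z\<bar> - \<bar>g z\<bar>)^2 / t = t * (f z)^2 + (g z)^2 / t - 2 * \<bar>f z * g z\<bar>"
      using t by (simp add: power2_eq_square field_simps abs_mult)
    finally show "\<bar>f z * g z\<bar> \<le> (t * (f z)^2 + (g z)^2 / t) / 2" by simp
  qed
  also have "... = (t * (\<integral>z. (f z)^2 \<partial>rho) + (\<integral>z. (g z)^2 \<partial>rho) / t) / 2"
    using f g unfolding L2_def by simp
  finally show "(\<integral>z. \<bar>f z * g z\<bar> \<partial>rho) \<le> (t * (\<integral>z. (f z)^2 \<partial>rho) + (\<integral>z. (g z)^2 \<partial>rho) / t) / 2" .
qed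

lemma L2_const: "L2 rho (\<lambda>z. c)"
  by (rule L2_bdd[where C = "\<bar>c\<bar>"]) auto

lemma cs1:
  assumes f: "L2 rho f"
  shows "(\<integral>z. \<bar>f z\<bar> \<partial>rho) \<le> sqrt (\<integral>z. (f z)^2 \<partial>rho)"
  using cs[OF f L2_const[of 1]] by (simp add: prob_space)


lemma Xi_meas: "(\<lambda>z. fst z $ i) \<in> borel_measurable rho"
  by (rule meas) (intro continuous_intros)

lemma lin_meas: "(\<lambda>z. v \<bullet> fst z) \<in> borel_measurable rho"
  by (rule meas) (intro continuous_intros)

lemma L2_Y: "L2 rho snd"
proof -
  have "(\<lambda>z. snd z) \<in> borel_measurable rho" by (rule meas) (intro continuous_intros)
  then show ?thesis unfolding L2_def using Y2 by simp
qed

lemma Xi_bdd: "AE z in rho. \<bar>fst z $ i\<bar> \<le> sqrt K"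
  using XsK by eventually_elim (meson component_le_norm_cart order_trans)

lemma lin_bdd: "AE z in rho. \<bar>v \<bullet> fst z\<bar> \<le> norm v * sqrt K"
  using XsK by eventually_elim (meson Cauchy_Schwarz_ineq2 mult_left_mono norm_ge_zero order_trans)

lemma L2_lin: "L2 rho (\<lambda>z. v \<bullet> fst z)"
  by (rule L2_bdd[OF lin_meas lin_bdd])

lemma L2_resid: "L2 rho (resid t)"
proof -
  have "L2 rho (\<lambda>z. t \<bullet> fst z - snd z)" by (rule L2_diff[OF L2_lin L2_Y])
  then show ?thesis unfolding resid_def[abs_def] .
qed

lemma L2_Xi: "L2 rho (\<lambda>z. fst z $ i)"
  by (rule L2_bdd[OF Xi_meas Xi_bdd])

lemma L2_fXi: "L2 rho f \<Longrightarrow> L2 rho (\<lambda>z. f z * fst z $ i)"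
  by (rule L2_mult_bdd[OF _ Xi_meas Xi_bdd])

lemma L2_flin: "L2 rho f \<Longrightarrow> L2 rho (\<lambda>z. f z * (v \<bullet> fst z))"
  by (rule L2_mult_bdd[OF _ lin_meas lin_bdd])

lemma int_mult_bdd:
  fixes f g :: "(real^'n) \<times> real \<Rightarrow> real"
  assumes f: "integrable rho f" and g: "g \<in> borel_measurable rho" and gb: "AE z in rho. \<bar>g z\<bar> \<le> C"
  shows "integrable rho (\<lambda>z. f z * g z)"
proof -
  have i: "integrable rho (\<lambda>z. C * f z)" using f by (rule integrable_mult_right)
  have m: "(\<lambda>z. f z * g z) \<in> borel_measurable rho" using f g by (intro borel_measurable_times) auto
  have ae: "AE z in rho. norm (f z * g z) \<le> norm (C * f z)" using gb
  proof eventually_elim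
    case (elim z)
    have "\<bar>f z\<bar> * \<bar>g z\<bar> \<le> \<bar>f z\<bar> * C" using elim by (intro mult_left_mono) auto
    moreover have "C \<ge> 0" using elim by linarith
    ultimately show ?case by (simp add: abs_mult mult.commute)
  qed
  show ?thesis by (rule Bochner_Integration.integrable_bound[OF i m ae])
qed

lemma quad_sum: "x \<bullet> ((W::real^'n^'n) *v y) = (\<Sum>i\<in>UNIV. \<Sum>j\<in>UNIV. W$i$j * (x$i * y$j))"
  by (simp add: inner_vec_def matrix_vector_mult_def sum_distrib_left mult_ac)

lemma sum2_int:
  assumes "\<And>i j. integrable rho (g i j)"
  shows "(\<Sum>i\<in>UNIV. \<Sum>j\<in>UNIV. (c i j :: real) * (\<integral>z. g i j z \<partial>rho)) = (\<integral>z. (\<Sum>i\<in>UNIV. \<Sum>j\<in>UNIV. c i j * g i j z) \<partial>rho)"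
proof -
  have "(\<integral>z. (\<Sum>i\<in>UNIV. \<Sum>j\<in>UNIV. c i j * g i j z) \<partial>rho) = (\<Sum>i\<in>UNIV. \<integral>z. (\<Sum>j\<in>UNIV. c i j * g i j z) \<partial>rho)"
    by (rule Bochner_Integration.integral_sum) (use assms in auto)
  also have "... = (\<Sum>i\<in>UNIV. \<Sum>j\<in>UNIV. \<integral>z. c i j * g i j z \<partial>rho)"
    by (intro sum.cong refl Bochner_Integration.integral_sum) (use assms in auto)
  also have "... = (\<Sum>i\<in>UNIV. \<Sum>j\<in>UNIV. c i j * (\<integral>z. g i j z \<partial>rho))"
    by simp
  finally show ?thesis by simp
qed

lemma sum1_int:
  assumes "\<And>i. integrable rho (g i)"
  shows "(\<Sum>i\<in>UNIV. (c i :: real) * (\<integral>z. g i z \<partial>rho)) = (\<integral>z. (\<Sum>i\<in>UNIV. c i * g i z) \<partial>rho)"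
proof -
  have "(\<integral>z. (\<Sum>i\<in>UNIV. c i * g i z) \<partial>rho) = (\<Sum>i\<in>UNIV. \<integral>z. c i * g i z \<partial>rho)"
    by (rule Bochner_Integration.integral_sum) (use assms in auto)
  then show ?thesis by simp
qed

lemma lin_mvec:
  assumes f: "L2 rho f"
  shows "x \<bullet> mvec rho f = (\<integral>z. f z * (x \<bullet> fst z) \<partial>rho)"
proof -
  have "x \<bullet> mvec rho f = (\<Sum>i\<in>UNIV. x$i * (\<integral>z. f z * fst z $ i \<partial>rho))"
    by (simp add: mvec_def inner_vec_def)
  also have "... = (\<integral>z. (\<Sum>i\<in>UNIV. x$i * (f z * fst z $ i)) \<partial>rho)"
    by (rule sum1_int) (rule L2_int[OF L2_fXi[OF f]])
  also have "... = (\<integral>z. f z * (x \<bullet> fst z) \<partial>rho)"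
    by (simp add: inner_vec_def sum_distrib_left mult_ac)
  finally show ?thesis .
qed


lemma int_r2XX: "integrable rho (\<lambda>z. (resid t z)^2 * fst z $ i * fst z $ j)"
proof -
  have "integrable rho (\<lambda>z. (resid t z * fst z $ i) * (resid t z * fst z $ j))"
    by (rule L2_prod[OF L2_fXi[OF L2_resid] L2_fXi[OF L2_resid]])
  moreover have "(\<lambda>z. (resid t z * fst z $ i) * (resid t z * fst z $ j)) = (\<lambda>z. (resid t z)^2 * fst z $ i * fst z $ j)"
    by (simp add: fun_eq_iff power2_eq_square mult_ac)
  ultimately show ?thesis by simp
qed

lemma frob_expand:
  "W \<bullet> noise_cov rho t = (\<integral>z. (resid t z)^2 * (fst z \<bullet> (W *v fst z)) \<partial>rho)
     - mvec rho (resid t) \<bullet> (W *v mvec rho (resid t))"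
proof -
  define m where "m = mvec rho (resid t)"
  have N: "noise_cov rho t $ i $ j = (\<integral>z. (resid t z)^2 * fst z $ i * fst z $ j \<partial>rho) - m$i * m$j" for i j
    by (simp add: noise_cov_def mvec_def m_def)
  have "W \<bullet> noise_cov rho t = (\<Sum>i\<in>UNIV. \<Sum>j\<in>UNIV. W$i$j * (\<integral>z. (resid t z)^2 * fst z $ i * fst z $ j \<partial>rho))
      - (\<Sum>i\<in>UNIV. \<Sum>j\<in>UNIV. W$i$j * (m$i * m$j))"
    by (simp add: inner_mat N right_diff_distrib sum_subtractf)
  also have "(\<Sum>i\<in>UNIV. \<Sum>j\<in>UNIV. W$i$j * (\<integral>z. (resid t z)^2 * fst z $ i * fst z $ j \<partial>rho))
      = (\<integral>z. (\<Sum>i\<in>UNIV. \<Sum>j\<in>UNIV. W$i$j * ((resid t z)^2 * fst z $ i * fst z $ j)) \<partial>rho)"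
    using sum2_int[where g = "\<lambda>i j z. (resid t z)^2 * fst z $ i * fst z $ j" and c = "\<lambda>i j. W$i$j", OF int_r2XX]
    by simp
  also have "... = (\<integral>z. (resid t z)^2 * (fst z \<bullet> (W *v fst z)) \<partial>rho)"
    by (simp add: quad_sum sum_distrib_left mult_ac)
  also have "(\<Sum>i\<in>UNIV. \<Sum>j\<in>UNIV. W$i$j * (m$i * m$j)) = m \<bullet> (W *v m)" by (simp add: quad_sum)
  finally show ?thesis unfolding m_def .
qed

lemma cov_psd: "psd_mat (noise_cov rho t)"
  unfolding psd_mat_def
proof (intro conjI allI)
  show "transpose (noise_cov rho t) = noise_cov rho t"
    by (simp add: vec_eq_iff transpose_def noise_cov_def mult_ac)
  fix x :: "real^'n"
  define m where "m = mvec rho (resid t)"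
  define g where "g z = resid t z * (x \<bullet> fst z)" for z
  have Lg: "L2 rho g" unfolding g_def[abs_def] by (rule L2_flin[OF L2_resid])
  have "x \<bullet> (noise_cov rho t *v x) = outer x \<bullet> noise_cov rho t"
    by (simp add: quad_sum inner_mat outer_def mult_ac)
  also have "... = (\<integral>z. (g z)^2 \<partial>rho) - (x \<bullet> m)^2"
    unfolding frob_expand outer_mult m_def[symmetric]
    by (simp add: g_def power2_eq_square inner_commute mult_ac)
  also have "x \<bullet> m = (\<integral>z. g z \<partial>rho)" unfolding m_def g_def by (rule lin_mvec[OF L2_resid])
  finally have eq: "x \<bullet> (noise_cov rho t *v x) = (\<integral>z. (g z)^2 \<partial>rho) - (\<integral>z. g z \<partial>rho)^2" .
  have "\<bar>\<integral>z. g z \<partial>rho\<bar> \<le> sqrt (\<integral>z. (g z)^2 \<partial>rho)"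
    using integral_abs_bound[of rho g] cs1[OF Lg] by linarith
  hence "\<bar>\<integral>z. g z \<partial>rho\<bar>^2 \<le> (sqrt (\<integral>z. (g z)^2 \<partial>rho))^2" by (rule power_mono) simp
  hence "(\<integral>z. g z \<partial>rho)^2 \<le> (\<integral>z. (g z)^2 \<partial>rho)" by simp
  then show "0 \<le> x \<bullet> (noise_cov rho t *v x)" unfolding eq by simp
qed

lemma vec_bound:
  assumes f: "L2 rho f"
  shows "norm (mvec rho f) \<le> sqrt K * (\<integral>z. \<bar>f z\<bar> \<partial>rho)"
proof -
  define m where "m = mvec rho f"
  have "m \<bullet> m = (\<integral>z. f z * (m \<bullet> fst z) \<partial>rho)" unfolding m_def by (rule lin_mvec[OF f])
  also have "... \<le> (\<integral>z. \<bar>f z\<bar> * (norm m * sqrt K) \<partial>rho)"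
  proof (rule integral_mono_AE)
    show "integrable rho (\<lambda>z. f z * (m \<bullet> fst z))" by (rule L2_int[OF L2_flin[OF f]])
    show "integrable rho (\<lambda>z. \<bar>f z\<bar> * (norm m * sqrt K))"
      by (intro integrable_mult_left integrable_abs L2_int[OF f])
    show "AE z in rho. f z * (m \<bullet> fst z) \<le> \<bar>f z\<bar> * (norm m * sqrt K)" using XsK
    proof eventually_elim
      case (elim z)
      have "f z * (m \<bullet> fst z) \<le> \<bar>f z\<bar> * \<bar>m \<bullet> fst z\<bar>" by (simp add: abs_mult[symmetric])
      also have "... \<le> \<bar>f z\<bar> * (norm m * norm (fst z))" by (intro mult_left_mono Cauchy_Schwarz_ineq2) simp
      also have "... \<le> \<bar>f z\<bar> * (norm m * sqrt K)" using elim by (intro mult_left_mono) simp_all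
      finally show ?case .
    qed
  qed
  also have "... = norm m * (sqrt K * (\<integral>z. \<bar>f z\<bar> \<partial>rho))" by (simp add: mult_ac)
  finally have h: "norm m * norm m \<le> norm m * (sqrt K * (\<integral>z. \<bar>f z\<bar> \<partial>rho))"
    by (simp add: power2_norm_eq_inner[symmetric] power2_eq_square)
  show ?thesis
  proof (cases "norm m = 0")
    case True
    have "0 \<le> sqrt K * (\<integral>z. \<bar>f z\<bar> \<partial>rho)" using K0 by simp
    then show ?thesis using True unfolding m_def by simp
  next
    case False
    hence "norm m > 0" by simp
    with h show ?thesis unfolding m_def by simp
  qed
qed

lemma m_diff: "mvec rho (resid t) - mvec rho (resid e) = mvec rho (\<lambda>z. (t - e) \<bullet> fst z)"
proof -
  have "(\<integral>z. resid t z * fst z $ i \<partial>rho) - (\<integral>z. resid e z * fst z $ i \<partial>rho)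
      = (\<integral>z. (t - e) \<bullet> fst z * fst z $ i \<partial>rho)" for i
  proof -
    have "(\<integral>z. resid t z * fst z $ i \<partial>rho) - (\<integral>z. resid e z * fst z $ i \<partial>rho)
        = (\<integral>z. resid t z * fst z $ i - resid e z * fst z $ i \<partial>rho)"
      by (rule Bochner_Integration.integral_diff[symmetric]) (rule L2_int[OF L2_fXi[OF L2_resid]])+
    also have "... = (\<integral>z. (t - e) \<bullet> fst z * fst z $ i \<partial>rho)"
      by (simp add: resid_def inner_diff_left algebra_simps)
    finally show ?thesis .
  qed
  then show ?thesis by (simp add: vec_eq_iff mvec_def)
qed

lemma sm_quad: "(second_moment rho *v v) \<bullet> v = (\<integral>z. (v \<bullet> fst z)^2 \<partial>rho)"
proof -
  have int: "integrable rho (\<lambda>z. fst z $ i * fst z $ j)" for i j by (rule L2_prod[OF L2_Xi L2_Xi])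
  have "(second_moment rho *v v) \<bullet> v = (\<Sum>i\<in>UNIV. \<Sum>j\<in>UNIV. (v$i * v$j) * (\<integral>z. fst z $ i * fst z $ j \<partial>rho))"
    by (simp add: inner_commute[of _ v] quad_sum second_moment_def mult_ac)
  also have "... = (\<integral>z. (\<Sum>i\<in>UNIV. \<Sum>j\<in>UNIV. (v$i * v$j) * (fst z $ i * fst z $ j)) \<partial>rho)"
    using sum2_int[where g = "\<lambda>i j z. fst z $ i * fst z $ j" and c = "\<lambda>i j. v$i * v$j", OF int]
    by simp
  also have "... = (\<integral>z. (v \<bullet> fst z)^2 \<partial>rho)"
    by (simp add: power2_eq_square inner_vec_def sum_product mult_ac)
  finally show ?thesis .
qed


lemma XWX_meas: "(\<lambda>z. fst z \<bullet> (W *v fst z)) \<in> borel_measurable rho"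
proof -
  have "(\<lambda>z. \<Sum>i\<in>UNIV. \<Sum>j\<in>UNIV. W$i$j * (fst z $ i * fst z $ j)) \<in> borel_measurable rho"
    by (rule meas) (intro continuous_intros)
  then show ?thesis by (simp add: quad_sum)
qed

lemma XWX_bdd: "AE z in rho. \<bar>fst z \<bullet> (W *v fst z)\<bar> \<le> K * norm W"
  using XK
proof eventually_elim
  case (elim z)
  have "\<bar>fst z \<bullet> (W *v fst z)\<bar> \<le> norm (fst z) * norm (W *v fst z)" by (rule Cauchy_Schwarz_ineq2)
  also have "... \<le> norm (fst z) * (norm W * norm (fst z))" by (intro mult_left_mono norm_mv) simp
  also have "... = norm W * (norm (fst z))^2" by (simp add: power2_eq_square mult_ac)
  also have "... \<le> norm W * K" using elim by (intro mult_left_mono) simp_all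
  finally show ?case by (simp add: mult.commute)
qed

lemma T1_bound:
  fixes W :: "real^'n^'n"
  shows "(\<integral>z. (resid t z)^2 * (fst z \<bullet> (W *v fst z)) \<partial>rho) - (\<integral>z. (resid e z)^2 * (fst z \<bullet> (W *v fst z)) \<partial>rho)
    \<le> K * norm W * (sqrt (\<integral>z. ((t - e) \<bullet> fst z)^2 \<partial>rho) * sqrt (\<integral>z. (resid t z)^2 \<partial>rho)
                   + sqrt (\<integral>z. ((t - e) \<bullet> fst z)^2 \<partial>rho) * sqrt (\<integral>z. (resid e z)^2 \<partial>rho))"
proof -
  define u :: "(real^'n) \<times> real \<Rightarrow> real" where "u z = (t - e) \<bullet> fst z" for z
  define g :: "(real^'n) \<times> real \<Rightarrow> real" where "g z = fst z \<bullet> (W *v fst z)" for z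
  have Lu: "L2 rho u" unfolding u_def[abs_def] by (rule L2_lin)
  have ru: "resid t z - resid e z = u z" for z by (simp add: resid_def u_def inner_diff_left)
  have it: "integrable rho (\<lambda>z. (resid t z)^2 * g z)" unfolding g_def
    by (rule int_mult_bdd[OF L2_sq[OF L2_resid] XWX_meas XWX_bdd])
  have ie: "integrable rho (\<lambda>z. (resid e z)^2 * g z)" unfolding g_def
    by (rule int_mult_bdd[OF L2_sq[OF L2_resid] XWX_meas XWX_bdd])
  have i1: "integrable rho (\<lambda>z. \<bar>u z * resid t z\<bar>)" by (rule L2_abs_prod[OF Lu L2_resid])
  have i2: "integrable rho (\<lambda>z. \<bar>u z * resid e z\<bar>)" by (rule L2_abs_prod[OF Lu L2_resid])
  have "(\<integral>z. (resid t z)^2 * g z \<partial>rho) - (\<integral>z. (resid e z)^2 * g z \<partial>rho)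
      = (\<integral>z. (resid t z)^2 * g z - (resid e z)^2 * g z \<partial>rho)"
    by (rule Bochner_Integration.integral_diff[symmetric, OF it ie])
  also have "... \<le> (\<integral>z. (\<bar>u z * resid t z\<bar> + \<bar>u z * resid e z\<bar>) * (K * norm W) \<partial>rho)"
  proof (rule integral_mono_AE)
    show "integrable rho (\<lambda>z. (resid t z)^2 * g z - (resid e z)^2 * g z)" using it ie by simp
    show "integrable rho (\<lambda>z. (\<bar>u z * resid t z\<bar> + \<bar>u z * resid e z\<bar>) * (K * norm W))"
      using i1 i2 by simp
    show "AE z in rho. (resid t z)^2 * g z - (resid e z)^2 * g z \<le> (\<bar>u z * resid t z\<bar> + \<bar>u z * resid e z\<bar>) * (K * norm W)"
      using XWX_bdd[of W]
    proof eventually_elim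
      case (elim z)
      have eq: "(resid t z)^2 * g z - (resid e z)^2 * g z = (u z * resid t z + u z * resid e z) * g z"
        unfolding ru[symmetric] by (simp add: power2_eq_square algebra_simps)
      have "(u z * resid t z + u z * resid e z) * g z \<le> \<bar>u z * resid t z + u z * resid e z\<bar> * \<bar>g z\<bar>"
        by (simp add: abs_mult[symmetric])
      also have "... \<le> (\<bar>u z * resid t z\<bar> + \<bar>u z * resid e z\<bar>) * (K * norm W)"
        using elim unfolding g_def by (intro mult_mono abs_triangle_ineq) auto
      finally show ?case unfolding eq .
    qed
  qed
  also have "... = K * norm W * ((\<integral>z. \<bar>u z * resid t z\<bar> \<partial>rho) + (\<integral>z. \<bar>u z * resid e z\<bar> \<partial>rho))"
    using i1 i2 by (simp add: mult_ac)
  also have "... \<le> K * norm W * (sqrt (\<integral>z. (u z)^2 \<partial>rho) * sqrt (\<integral>z. (resid t z)^2 \<partial>rho)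
                   + sqrt (\<integral>z. (u z)^2 \<partial>rho) * sqrt (\<integral>z. (resid e z)^2 \<partial>rho))"
    using K0 by (intro mult_left_mono add_mono cs[OF Lu L2_resid]) simp_all
  finally show ?thesis unfolding g_def u_def .
qed


lemma ring_aux: "(k * sq) * (w * (k * st)) + (k * se) * (w * (k * sq)) = (k * k) * w * (sq * st + sq * se)" for k sq w st se :: real
  by (simp add: algebra_simps)

lemma bil_bound: "\<bar>x \<bullet> ((W::real^'n^'n) *v y)\<bar> \<le> norm x * (norm W * norm y)"
proof -
  have "\<bar>x \<bullet> (W *v y)\<bar> \<le> norm x * norm (W *v y)" by (rule Cauchy_Schwarz_ineq2)
  also have "... \<le> norm x * (norm W * norm y)" by (intro mult_left_mono norm_mv) simp
  finally show ?thesis .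
qed

lemma mvec_bound2:
  assumes f: "L2 rho f"
  shows "norm (mvec rho f) \<le> sqrt K * sqrt (\<integral>z. (f z)^2 \<partial>rho)"
proof -
  have "norm (mvec rho f) \<le> sqrt K * (\<integral>z. \<bar>f z\<bar> \<partial>rho)" by (rule vec_bound[OF f])
  also have "... \<le> sqrt K * sqrt (\<integral>z. (f z)^2 \<partial>rho)" using K0 by (intro mult_left_mono cs1[OF f]) simp
  finally show ?thesis .
qed

lemma T2_bound:
  fixes W :: "real^'n^'n"
  shows "- (mvec rho (resid t) \<bullet> (W *v mvec rho (resid t)) - mvec rho (resid e) \<bullet> (W *v mvec rho (resid e)))
    \<le> K * norm W * (sqrt (\<integral>z. ((t - e) \<bullet> fst z)^2 \<partial>rho) * sqrt (\<integral>z. (resid t z)^2 \<partial>rho)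
                   + sqrt (\<integral>z. ((t - e) \<bullet> fst z)^2 \<partial>rho) * sqrt (\<integral>z. (resid e z)^2 \<partial>rho))"
proof -
  define mt where "mt = mvec rho (resid t)"
  define me where "me = mvec rho (resid e)"
  define d where "d = mt - me"
  define sq where "sq = sqrt (\<integral>z. ((t - e) \<bullet> fst z)^2 \<partial>rho)"
  define st where "st = sqrt (\<integral>z. (resid t z)^2 \<partial>rho)"
  define se where "se = sqrt (\<integral>z. (resid e z)^2 \<partial>rho)"
  have sq0: "sq \<ge> 0" and st0: "st \<ge> 0" and se0: "se \<ge> 0" unfolding sq_def st_def se_def by simp_all
  have sK0: "sqrt K \<ge> 0" using K0 by simp
  have KK: "sqrt K * sqrt K = K" using K0 by simp
  have dm: "d = mvec rho (\<lambda>z. (t - e) \<bullet> fst z)" unfolding d_def mt_def me_def by (rule m_diff)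
  have nd: "norm d \<le> sqrt K * sq" unfolding dm sq_def by (rule mvec_bound2[OF L2_lin])
  have nt: "norm mt \<le> sqrt K * st" unfolding mt_def st_def by (rule mvec_bound2[OF L2_resid])
  have ne: "norm me \<le> sqrt K * se" unfolding me_def se_def by (rule mvec_bound2[OF L2_resid])
  have id: "mt \<bullet> (W *v mt) - me \<bullet> (W *v me) = d \<bullet> (W *v mt) + me \<bullet> (W *v d)"
    by (simp add: d_def inner_diff_left inner_diff_right matrix_vector_mult_diff_distrib)
  have "- (mt \<bullet> (W *v mt) - me \<bullet> (W *v me)) \<le> \<bar>d \<bullet> (W *v mt)\<bar> + \<bar>me \<bullet> (W *v d)\<bar>"
    unfolding id by linarith
  also have "... \<le> norm d * (norm W * norm mt) + norm me * (norm W * norm d)"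
    by (intro add_mono bil_bound)
  also have "... \<le> (sqrt K * sq) * (norm W * (sqrt K * st)) + (sqrt K * se) * (norm W * (sqrt K * sq))"
    using nd nt ne sq0 st0 se0 sK0
    by (intro add_mono mult_mono mult_left_mono) (simp_all add: mult_nonneg_nonneg)
  also have "... = (sqrt K * sqrt K) * norm W * (sq * st + sq * se)" by (rule ring_aux)
  also have "... = K * norm W * (sq * st + sq * se)" unfolding KK ..
  finally show ?thesis unfolding mt_def me_def sq_def st_def se_def .
qed


lemma main_est:
  fixes s1 s2 :: "real^'n^'n" and a :: real
  assumes P1: "psd_mat s1" and P2: "psd_mat s2"
    and Q1: "s1 ** s1 = noise_cov rho t" and Q2: "s2 ** s2 = noise_cov rho e"
    and lb1: "\<forall>x. (a * sqrt (risk rho t)) * (x \<bullet> x) \<le> x \<bullet> (s1 *v x)"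
    and lb2: "\<forall>x. (a * sqrt (risk rho e)) * (x \<bullet> x) \<le> x \<bullet> (s2 *v x)"
    and a: "a > 0" and Rt: "risk rho t > 0" and Re: "risk rho e > 0"
  shows "(s1 - s2) \<bullet> (s1 - s2) \<le> 8 * K^2 * (\<integral>z. ((t - e) \<bullet> fst z)^2 \<partial>rho) / a^2"
proof -
  define W where "W = s1 - s2"
  define w where "w = norm W"
  define q where "q = (\<integral>z. ((t - e) \<bullet> fst z)^2 \<partial>rho)"
  define sq where "sq = sqrt q"
  define rt where "rt = sqrt (risk rho t)"
  define re where "re = sqrt (risk rho e)"
  have q0: "q \<ge> 0" unfolding q_def by simp
  have ww: "W \<bullet> W = w^2" unfolding w_def by (simp add: power2_norm_eq_inner)
  have w0: "w \<ge> 0" unfolding w_def by simp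
  have sym1: "transpose s1 = s1" and sym2: "transpose s2 = s2" using P1 P2 unfolding psd_mat_def by auto
  have st: "sqrt (\<integral>z. (resid t z)^2 \<partial>rho) = sqrt 2 * rt"
    unfolding rt_def risk_def by (simp add: real_sqrt_mult[symmetric])
  have se: "sqrt (\<integral>z. (resid e z)^2 \<partial>rho) = sqrt 2 * re"
    unfolding re_def risk_def by (simp add: real_sqrt_mult[symmetric])
  have pos: "rt + re > 0" unfolding rt_def re_def using Rt Re by (simp add: add_pos_pos)
  have "(a * rt + a * re) * w^2 \<le> W \<bullet> (s1 ** s1 - s2 ** s2)"
    using sqrt_perturb[OF sym1 sym2 lb1 lb2] unfolding W_def[symmetric] ww rt_def re_def .
  also have "... = W \<bullet> noise_cov rho t - W \<bullet> noise_cov rho e" unfolding Q1 Q2 by (simp add: inner_diff_right)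
  also have "... = ((\<integral>z. (resid t z)^2 * (fst z \<bullet> (W *v fst z)) \<partial>rho) - (\<integral>z. (resid e z)^2 * (fst z \<bullet> (W *v fst z)) \<partial>rho))
     + (- (mvec rho (resid t) \<bullet> (W *v mvec rho (resid t)) - mvec rho (resid e) \<bullet> (W *v mvec rho (resid e))))"
    unfolding frob_expand by simp
  also have "... \<le> K * w * (sq * (sqrt 2 * rt) + sq * (sqrt 2 * re)) + K * w * (sq * (sqrt 2 * rt) + sq * (sqrt 2 * re))"
    using T1_bound[where t=t and e=e and W=W] T2_bound[where t=t and e=e and W=W] unfolding st se w_def[symmetric] q_def[symmetric] sq_def[symmetric]
    by (rule add_mono)
  also have "... = (rt + re) * ((2 * sqrt 2 * K * sq) * w)" by (simp add: algebra_simps)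
  finally have "(rt + re) * (a * w^2) \<le> (rt + re) * ((2 * sqrt 2 * K * sq) * w)" by (simp add: algebra_simps)
  hence h: "a * w^2 \<le> (2 * sqrt 2 * K * sq) * w" using pos by (rule mult_left_le_imp_le)
  have "w^2 \<le> (2 * sqrt 2 * K * sq)^2 / a^2"
  proof (cases "w = 0")
    case True then show ?thesis by simp
  next
    case False
    hence wp: "w > 0" using w0 by simp
    have "a * w * w \<le> (2 * sqrt 2 * K * sq) * w" using h by (simp add: power2_eq_square mult_ac)
    hence aw: "a * w \<le> 2 * sqrt 2 * K * sq" using wp by simp
    have "(a * w)^2 \<le> (2 * sqrt 2 * K * sq)^2" by (rule power_mono[OF aw]) (use a w0 in simp)
    then show ?thesis using a by (simp add: field_simps power_mult_distrib)
  qed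
  also have "... = 8 * K^2 * q / a^2" unfolding sq_def using q0 by (simp add: power_mult_distrib)
  finally show ?thesis unfolding ww[symmetric] W_def q_def .
qed

end


theorem lemma5p3:
  fixes \<rho> :: "((real^'n) \<times> real) measure" and K a :: real
  assumes "prob_space \<rho>"
    and "sets \<rho> = sets borel"
    and "integrable \<rho> (\<lambda>z. (snd z)\<^sup>2)"
    and "AE z in \<rho>. (norm (fst z))\<^sup>2 \<le> K"
    and "a > 0"
    and "\<forall>\<theta>. loewner_ge (sigma_mat \<rho> \<theta> ** sigma_mat \<rho> \<theta>)
                         ((a\<^sup>2 * risk \<rho> \<theta>) *\<^sub>R mat 1)"
    and "\<forall>\<theta>. risk \<rho> \<theta> \<ge> a\<^sup>2"
  shows "\<exists>c>0. \<forall>\<theta> \<eta>.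
           (hs_norm (sigma_mat \<rho> \<theta> - sigma_mat \<rho> \<eta>))\<^sup>2
             \<le> 2 * c * K * ((second_moment \<rho> *v (\<theta> - \<eta>)) \<bullet> (\<theta> - \<eta>))"
proof -
  have D: "dat \<rho> K" unfolding dat_def dat_axioms_def using assms(1-4) by auto
  interpret dat \<rho> K by (rule D)
  define c where "c = (if K > 0 then 4 * K / a^2 else 1)"
  have c0: "c > 0" unfolding c_def using assms(5) by simp
  have props: "psd_mat (sigma_mat \<rho> t) \<and> sigma_mat \<rho> t ** sigma_mat \<rho> t = noise_cov \<rho> t" for t
    unfolding sigma_mat_def by (rule psd_sqrt_props[OF cov_psd])
  have Rpos: "risk \<rho> t > 0" for t using assms(7) assms(5) by (smt (verit) zero_less_power)
  have lb: "\<forall>x. (a * sqrt (risk \<rho> t)) * (x \<bullet> x) \<le> x \<bullet> (sigma_mat \<rho> t *v x)" for t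
  proof
    fix x :: "real^'n"
    have "sqrt (a^2 * risk \<rho> t) * (x \<bullet> x) \<le> x \<bullet> (sigma_mat \<rho> t *v x)"
      by (rule sqrt_lower) (use props assms(6) Rpos[of t] in auto)
    moreover have "sqrt (a^2 * risk \<rho> t) = a * sqrt (risk \<rho> t)" using assms(5) by (simp add: real_sqrt_mult)
    ultimately show "(a * sqrt (risk \<rho> t)) * (x \<bullet> x) \<le> x \<bullet> (sigma_mat \<rho> t *v x)" by simp
  qed
  have "(hs_norm (sigma_mat \<rho> t - sigma_mat \<rho> e))\<^sup>2
      \<le> 2 * c * K * ((second_moment \<rho> *v (t - e)) \<bullet> (t - e))" for t e
  proof -
    have "(hs_norm (sigma_mat \<rho> t - sigma_mat \<rho> e))\<^sup>2
       \<le> 8 * K^2 * (\<integral>z. ((t - e) \<bullet> fst z)^2 \<partial>\<rho>) / a^2"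
      unfolding hs_norm_sq
      by (rule main_est) (use props lb Rpos assms(5) in auto)
    also have "... = 2 * c * K * ((second_moment \<rho> *v (t - e)) \<bullet> (t - e))"
      unfolding sm_quad c_def using K0 assms(5) by (auto simp: power2_eq_square field_simps)
    finally show ?thesis .
  qed
  then show ?thesis using c0 by blast
qed


end
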